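(* Let $g_1,\dots,g_r\in\mathbb R[X_1,\dots,X_n]$ satisfy $1-\|\mathbf X\|_2^2\in\mathcal Q(\mathbf g)$ and $\|g_i\|\le\tfrac12$, with $S=\mathcal S(\mathbf g)\neq\emptyset$. Let $f\in\mathbb R[\mathbf X]$ of degree $d$ with $f^*=\min_{x\in S}f(x)>0$, and assume there exists $x\in[-1,1]^n\setminus S$ with $f(x)\le0$. Let $A=\{x\in[-1,1]^n: f(x)\le \tfrac{3f^*}{4}\}$. Then $d_H(A,S)\ge\dfrac{\epsilon(f)}{8d^2}$.
   Context: $\Sigma^2$ sums of squares, $\mathcal S(\mathbf g)=\{x:g_i(x)\ge0\ \forall i\}$, $\mathcal Q(\mathbf g)=\Sigma^2+\sum_i\Sigma^2g_i$, $\|h\|=\max_{[-1,1]^n}|h|$, $\|\mathbf X\|_2^2=\sum X_i^2$, $\epsilon(f)=f^*/\|f\|$. $d_H(A,B)=\max\{\sup_{a\in A}\operatorname{dist}(a,B),\sup_{b\in B}\operatorname{dist}(b,A)\}$ is the Hausdorff distance (Euclidean). *)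

theory Defs
  imports "HOL-Analysis.Analysis"
begin

text \<open>Multivariate real polynomials in n variables, rendered as polynomial functions on
  real^'n (the index type 'n is finite, so n = CARD('n)). A monomial is an exponent
  vector alpha :: 'n => nat.\<close>

definition monom_eval :: "('n::finite \<Rightarrow> nat) \<Rightarrow> real^'n \<Rightarrow> real" where
  "monom_eval \<alpha> x = (\<Prod>i\<in>UNIV. (x $ i) ^ (\<alpha> i))"

definition poly_fun_deg_le :: "(real^'n::finite \<Rightarrow> real) \<Rightarrow> nat \<Rightarrow> bool" where
  "poly_fun_deg_le f d \<longleftrightarrow>
     (\<exists>c :: ('n \<Rightarrow> nat) \<Rightarrow> real. finite {\<alpha>. c \<alpha> \<noteq> 0}
        \<and> (\<forall>\<alpha>. c \<alpha> \<noteq> 0 \<longrightarrow> sum \<alpha> UNIV \<le> d)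
        \<and> (\<forall>x. f x = (\<Sum>\<alpha>\<in>{\<alpha>. c \<alpha> \<noteq> 0}. c \<alpha> * monom_eval \<alpha> x)))"

definition is_poly :: "(real^'n::finite \<Rightarrow> real) \<Rightarrow> bool" where
  "is_poly f \<longleftrightarrow> (\<exists>d. poly_fun_deg_le f d)"

text \<open>Total degree (the coefficients of a real polynomial are determined by its function).\<close>
definition poly_degree :: "(real^'n::finite \<Rightarrow> real) \<Rightarrow> nat" where
  "poly_degree f = (LEAST d. poly_fun_deg_le f d)"

definition is_sos :: "(real^'n::finite \<Rightarrow> real) \<Rightarrow> bool" where
  "is_sos s \<longleftrightarrow> (\<exists>ps :: (real^'n \<Rightarrow> real) list.
      (\<forall>p\<in>set ps. is_poly p) \<and> (\<forall>x. s x = (\<Sum>p\<leftarrow>ps. (p x)^2)))"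

text \<open>Quadratic module Q(g) generated by g_1..g_r (polynomial identity = identity of functions).\<close>
definition in_qmodule :: "(nat \<Rightarrow> real^'n::finite \<Rightarrow> real) \<Rightarrow> nat \<Rightarrow> (real^'n \<Rightarrow> real) \<Rightarrow> bool" where
  "in_qmodule g r h \<longleftrightarrow> (\<exists>\<sigma> :: nat \<Rightarrow> real^'n \<Rightarrow> real. (\<forall>i\<in>{0..r}. is_sos (\<sigma> i))
      \<and> (\<forall>x. h x = \<sigma> 0 x + (\<Sum>i=1..r. \<sigma> i x * g i x)))"

definition semialg :: "(nat \<Rightarrow> real^'n::finite \<Rightarrow> real) \<Rightarrow> nat \<Rightarrow> (real^'n) set" where
  "semialg g r = {x. \<forall>i\<in>{1..r}. g i x \<ge> 0}"

definition cube :: "(real^'n::finite) set" where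
  "cube = {x. \<forall>i. \<bar>x $ i\<bar> \<le> 1}"

definition supnorm :: "(real^'n::finite \<Rightarrow> real) \<Rightarrow> real" where
  "supnorm h = (SUP x\<in>cube. \<bar>h x\<bar>)"

definition hausdorff_dist :: "('a::metric_space) set \<Rightarrow> 'a set \<Rightarrow> real" where
  "hausdorff_dist A B = max (SUP a\<in>A. infdist a B) (SUP b\<in>B. infdist b A)"

end

theory Submission imports Defs "HOL-Computational_Algebra.Polynomial" begin

lemma lagrange:
  fixes Q :: "real poly" and t :: "nat \<Rightarrow> real" and N :: "nat set"
  assumes fin: "finite N" and inj: "inj_on t N" and deg: "degree Q < card N"
  shows "poly Q z = (\<Sum>j\<in>N. poly Q (t j) * (\<Prod>k\<in>N-{j}. (z - t k)/(t j - t k)))"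
proof -
  define L where "L = (\<Sum>j\<in>N. smult (poly Q (t j) / (\<Prod>k\<in>N-{j}. (t j - t k))) (\<Prod>k\<in>N-{j}. [:-t k, 1:]))"
  have polyL: "poly L y = (\<Sum>j\<in>N. poly Q (t j) * (\<Prod>k\<in>N-{j}. (y - t k)/(t j - t k)))" for y
    unfolding L_def by (simp add: poly_sum poly_prod prod_dividef)
  have "degree L \<le> card N - 1"
    unfolding L_def
  proof (rule degree_sum_le[OF fin])
    fix j assume j: "j \<in> N"
    have "degree (\<Prod>k\<in>N-{j}. [:-t k, 1:]) \<le> sum (degree \<circ> (\<lambda>k. [:-t k, 1:])) (N-{j})"
      by (rule degree_prod_sum_le) (use fin in auto)
    also have "\<dots> = card N - 1" using j fin by simp
    finally show "degree (smult (poly Q (t j) / (\<Prod>k\<in>N-{j}. (t j - t k))) (\<Prod>k\<in>N-{j}. [:-t k, 1:])) \<le> card N - 1"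
      by (rule order_trans[OF degree_smult_le])
  qed
  hence degL: "degree L < card (t ` N)" using deg card_image[OF inj] by linarith
  have agree: "poly Q y = poly L y" if "y \<in> t ` N" for y
  proof -
    from that obtain i where i: "i \<in> N" "y = t i" by auto
    have "poly L y = (\<Sum>j\<in>N. poly Q (t j) * (\<Prod>k\<in>N-{j}. (t i - t k)/(t j - t k)))"
      using polyL i by simp
    also have "\<dots> = poly Q (t i) * (\<Prod>k\<in>N-{i}. (t i - t k)/(t i - t k))
         + (\<Sum>j\<in>N-{i}. poly Q (t j) * (\<Prod>k\<in>N-{j}. (t i - t k)/(t j - t k)))"
      by (rule sum.remove[OF fin i(1)])
    also have "(\<Sum>j\<in>N-{i}. poly Q (t j) * (\<Prod>k\<in>N-{j}. (t i - t k)/(t j - t k))) = 0"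
    proof (rule sum.neutral, intro ballI)
      fix j assume j: "j \<in> N - {i}"
      have iN: "i \<in> N - {j}" using i j by auto
      have "(\<Prod>k\<in>N-{j}. (t i - t k)/(t j - t k)) = 0"
        by (rule prod_zero) (use fin iN in auto)
      thus "poly Q (t j) * (\<Prod>k\<in>N-{j}. (t i - t k)/(t j - t k)) = 0" by simp
    qed
    also have "(\<Prod>k\<in>N-{i}. (t i - t k)/(t i - t k)) = 1"
    proof (rule prod.neutral, intro ballI)
      fix k assume k: "k \<in> N - {i}"
      hence "t i \<noteq> t k" using inj i(1) by (auto dest: inj_onD)
      thus "(t i - t k)/(t i - t k) = 1" by simp
    qed
    finally have "poly L y = poly Q (t i)" by simp
    thus ?thesis using i(2) by simp
  qed
  have degQ: "degree Q < card (t ` N)" using deg by (simp only: card_image[OF inj])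
  have QL: "Q = L" by (rule poly_eqI_degree[of "t ` N" Q L, OF agree degQ degL])
  have "poly Q z = poly L z" by (simp only: QL)
  also have "\<dots> = (\<Sum>j\<in>N. poly Q (t j) * (\<Prod>k\<in>N-{j}. (z - t k)/(t j - t k)))" by (rule polyL)
  finally show ?thesis .
qed


lemma prod_plus_fact: "(\<Prod>k\<in>{1..d}. (j + k::nat)) * fact j = fact (d + j)"
proof (induction d)
  case 0 then show ?case by simp
next
  case (Suc d)
  have "(\<Prod>k\<in>{1..Suc d}. (j + k::nat)) = (\<Prod>k\<in>{1..d}. (j + k)) * (j + Suc d)"
    by (simp add: prod.cl_ivl_Suc)
  then show ?case using Suc by (simp add: algebra_simps)
qed

lemma prod_upper_fact0: "(\<Prod>k\<in>{j<..j+m}. (k - j::nat)) = fact m"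
proof (induction m)
  case 0 then show ?case by simp
next
  case (Suc m)
  have "{j<..j + Suc m} = insert (Suc (j + m)) {j<..j+m}" by auto
  hence "(\<Prod>k\<in>{j<..j + Suc m}. (k - j::nat)) = (Suc (j + m) - j) * (\<Prod>k\<in>{j<..j+m}. (k - j))" by simp
  then show ?case using Suc by simp
qed

lemma prod_upper_fact: "j \<le> d \<Longrightarrow> (\<Prod>k\<in>{j<..d}. (k - j::nat)) = fact (d - j)"
  using prod_upper_fact0[of j "d - j"] by simp

lemma prod_lower_fact: "(\<Prod>k\<in>{1..<j}. (j - k::nat)) = fact (j - 1)"
proof -
  have "(\<Prod>k\<in>{1..<j}. (j - k::nat)) = (\<Prod>i\<in>{1..<j}. i)"
    by (rule prod.reindex_bij_witness[of _ "\<lambda>i. j - i" "\<lambda>i. j - i"]) auto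
  also have "\<dots> = fact (j - 1)"
    by (cases j) (auto simp: fact_prod atLeastLessThanSuc_atLeastAtMost)
  finally show ?thesis .
qed

lemma fact_sq_le: "j \<le> d \<Longrightarrow> fact d * fact d \<le> (fact (d - j) * fact (d + j) :: nat)"
proof (induction j)
  case 0 then show ?case by simp
next
  case (Suc j)
  have IH: "fact d * fact d \<le> (fact (d - j) * fact (d + j) :: nat)" using Suc by simp
  have e0: "d - j = Suc (d - Suc j)" using Suc.prems by simp
  have e1: "fact (d - j) = (d - j) * (fact (d - Suc j) :: nat)" unfolding e0 by simp
  have e2: "fact (d + Suc j) = (Suc (d + j)) * (fact (d + j) :: nat)" by simp
  have "fact (d - j) * fact (d + j) = (d - j) * (fact (d - Suc j) * fact (d + j) :: nat)"
    unfolding e1 by (simp only: mult.assoc)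
  also have "\<dots> \<le> Suc (d + j) * (fact (d - Suc j) * fact (d + j))"
    by (intro mult_right_mono) auto
  also have "\<dots> = fact (d - Suc j) * fact (d + Suc j)" unfolding e2 by (simp only: mult_ac)
  finally show ?case by (rule order_trans[OF IH])
qed

lemma prod_ratio_le2:
  assumes j: "1 \<le> j" "j \<le> d"
  shows "(\<Prod>k\<in>{1..d}-{j}. real (k^2) / \<bar>real (j^2) - real (k^2)\<bar>) \<le> 2"
proof -
  define h where "h k = (if k < j then j - k else k - j) * (j + k)" for k
  have fin: "finite ({1..d}-{j})" by simp
  have jin: "j \<in> {1..d}" using j by simp
  have A: "j * (\<Prod>k\<in>{1..d}-{j}. k) = fact d"
    using prod.remove[OF _ jin, of "\<lambda>k. k"] by (simp add: fact_prod)
  have split: "{1..d}-{j} = {1..<j} \<union> {j<..d}" using j by auto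
  have B1: "(\<Prod>k\<in>{1..d}-{j}. (if k < j then j - k else k - j)) = fact (j - 1) * fact (d - j)"
  proof -
    have "(\<Prod>k\<in>{1..d}-{j}. (if k < j then j - k else k - j))
       = (\<Prod>k\<in>{1..<j}. (if k < j then j - k else k - j)) * (\<Prod>k\<in>{j<..d}. (if k < j then j - k else k - j))"
      unfolding split by (rule prod.union_disjoint) auto
    also have "(\<Prod>k\<in>{1..<j}. (if k < j then j - k else k - j)) = (\<Prod>k\<in>{1..<j}. j - k)"
      by (rule prod.cong) auto
    also have "(\<Prod>k\<in>{j<..d}. (if k < j then j - k else k - j)) = (\<Prod>k\<in>{j<..d}. k - j)"
      by (rule prod.cong) auto
    finally show ?thesis using prod_lower_fact prod_upper_fact[OF j(2)] by simp
  qed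
  have B2: "2 * j * (\<Prod>k\<in>{1..d}-{j}. j + k) * fact j = fact (d + j)"
    using prod.remove[OF _ jin, of "\<lambda>k. j + k"] prod_plus_fact[of j d] by (simp add: mult_2)
  have fj: "fact j = j * fact (j - 1 :: nat)" 
  proof -
    have "j = Suc (j - 1)" using j by simp
    hence "fact j = fact (Suc (j - 1) :: nat)" by simp
    also have "\<dots> = Suc (j - 1) * fact (j - 1)" by simp
    finally show ?thesis using j by simp
  qed
  have B: "2 * j * j * (\<Prod>k\<in>{1..d}-{j}. h k) = fact (d - j) * fact (d + j)"
  proof -
    have "(\<Prod>k\<in>{1..d}-{j}. h k) = fact (j - 1) * fact (d - j) * (\<Prod>k\<in>{1..d}-{j}. j + k)"
      unfolding h_def prod.distrib B1 by simp
    hence "2 * j * j * (\<Prod>k\<in>{1..d}-{j}. h k)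
         = fact (d - j) * (2 * j * (\<Prod>k\<in>{1..d}-{j}. j + k) * (j * fact (j - 1)))"
      by (simp only: mult_ac)
    also have "\<dots> = fact (d - j) * fact (d + j)"
      by (simp only: fj[symmetric] B2)
    finally show ?thesis .
  qed
  have habs: "\<bar>real (j^2) - real (k^2)\<bar> = real (h k)" if "k \<in> {1..d}-{j}" for k
  proof (cases "k < j")
    case True
    hence "real (h k) = (real j - real k) * (real j + real k)" unfolding h_def by (simp add: of_nat_diff)
    moreover have "real k < real j" using True by simp
    ultimately show ?thesis by (simp add: power2_eq_square algebra_simps)
  next
    case False
    hence kj: "j < k" using that by auto
    hence "real (h k) = (real k - real j) * (real j + real k)" unfolding h_def by (simp add: of_nat_diff)
    moreover have "real j < real k" using kj by simp
    ultimately show ?thesis by (simp add: power2_eq_square algebra_simps)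
  qed
  have "(\<Prod>k\<in>{1..d}-{j}. real (k^2) / \<bar>real (j^2) - real (k^2)\<bar>)
      = (\<Prod>k\<in>{1..d}-{j}. real (k^2) / real (h k))"
  proof (rule prod.cong[OF refl])
    fix k assume "k \<in> {1..d}-{j}"
    show "real (k^2) / \<bar>real (j^2) - real (k^2)\<bar> = real (k^2) / real (h k)"
      by (simp only: habs[OF \<open>k \<in> {1..d}-{j}\<close>])
  qed
  also have "\<dots> = real (\<Prod>k\<in>{1..d}-{j}. k)^2 / real (\<Prod>k\<in>{1..d}-{j}. h k)"
    by (simp add: prod_dividef power_mult_distrib prod_power_distrib[symmetric])
  also have "\<dots> = 2 * (real j * real (\<Prod>k\<in>{1..d}-{j}. k))^2 / (2 * real j * real j * real (\<Prod>k\<in>{1..d}-{j}. h k))"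
    using j by (simp add: power2_eq_square field_simps)
  also have "\<dots> = 2 * (real (fact d))^2 / (real (fact (d - j) * fact (d + j)))"
  proof -
    have "real j * real (\<Prod>k\<in>{1..d}-{j}. k) = real (fact d)" 
    proof -
      have "real (j * (\<Prod>k\<in>{1..d}-{j}. k)) = real (fact d)" using A by (rule arg_cong)
      thus ?thesis by (simp only: of_nat_mult)
    qed
    moreover have "2 * real j * real j * real (\<Prod>k\<in>{1..d}-{j}. h k) = real (fact (d - j) * fact (d + j))"
    proof -
      have "real (2 * j * j * (\<Prod>k\<in>{1..d}-{j}. h k)) = real (fact (d - j) * fact (d + j))" using B by (rule arg_cong)
      thus ?thesis by (simp only: of_nat_mult of_nat_numeral)
    qed
    ultimately show ?thesis by simp
  qed
  also have "\<dots> \<le> 2 * 1"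
  proof -
    have "real (fact d)^2 \<le> real (fact (d - j) * fact (d + j))"
      using fact_sq_le[OF j(2)] unfolding power2_eq_square of_nat_mult[symmetric] of_nat_le_iff .
    moreover have "real (fact (d - j) * fact (d + j)) > 0" by simp
    ultimately show ?thesis by (simp add: divide_le_eq)
  qed
  finally show ?thesis by simp
qed

lemma sum_inv_sq: "1 \<le> d \<Longrightarrow> (\<Sum>j=1..d. 1 / real j ^ 2) \<le> 2 - 1 / real d"
proof (induction d rule: dec_induct)
  case base then show ?case by simp
next
  case (step d)
  have "(\<Sum>j=1..Suc d. 1 / real j ^ 2) = (\<Sum>j=1..d. 1 / real j ^ 2) + 1 / (real d + 1)^2"
    by (simp add: sum.cl_ivl_Suc)
  also have "\<dots> \<le> 2 - 1 / real d + 1 / (real d + 1)^2" using step by simp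
  also have "\<dots> \<le> 2 - 1 / (real d + 1)"
  proof -
    have d: "real d \<ge> 1" using step by simp
    have e0: "1 / x^2 + 1 / x = (1 + x) / x^2" if "x > 0" for x :: real
      using that by (simp add: field_simps power2_eq_square)
    have e: "1 / (real d + 1)^2 + 1 / (real d + 1) = (real d + 2) / (real d + 1)^2"
      using e0[of "real d + 1"] by (simp add: add.commute)
    have "(real d + 2) * real d \<le> (real d + 1)^2" by (simp add: power2_eq_square algebra_simps)
    hence "(real d + 2) / (real d + 1)^2 \<le> 1 / real d" using d by (simp add: field_simps)
    hence "1 / (real d + 1)^2 + 1 / (real d + 1) \<le> 1 / real d" using e by simp
    thus ?thesis by simp
  qed
  finally show ?case by (simp add: add.commute)
qed


lemma div_div_cancel_real: "(c::real) \<noteq> 0 \<Longrightarrow> (a / c) / (b / c) = a / b"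
  by (cases "b = 0") (simp_all add: field_simps)

lemma markov_endpoint:
  fixes P :: "real poly" and d :: nat and B :: real
  assumes degP: "degree P \<le> d" and bnd: "\<And>\<sigma>. 0 \<le> \<sigma> \<Longrightarrow> \<sigma> \<le> 1 \<Longrightarrow> \<bar>poly P \<sigma>\<bar> \<le> B"
  shows "\<bar>coeff P 1\<bar> \<le> 8 * real d ^ 2 * B"
proof (cases "d = 0")
  case True
  hence "coeff P 1 = 0" using degP by (intro coeff_eq_0) auto
  moreover have "0 \<le> B" using bnd[of 0] by auto
  ultimately show ?thesis by simp
next
  case False
  hence d1: "1 \<le> d" by simp
  have B0: "0 \<le> B" using bnd[of 0] by auto
  define R where "R = P - [:poly P 0:]"
  have "poly R 0 = 0" unfolding R_def by simp
  then obtain R1 where R1: "R = [:0, 1:] * R1" using poly_eq_0_iff_dvd[of R 0] by (auto elim!: dvdE)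
  have c1: "coeff P 1 = poly R1 0"
  proof -
    have "coeff P 1 = coeff R 1" unfolding R_def by simp
    also have "\<dots> = coeff R1 0" unfolding R1 by simp
    finally show ?thesis by (simp add: poly_0_coeff_0)
  qed
  have degR: "degree R \<le> d" unfolding R_def by (rule degree_diff_le) (use degP in auto)
  have degR1: "degree R1 < d"
  proof (cases "R1 = 0")
    case True then show ?thesis using d1 by simp
  next
    case False
    hence "degree R = 1 + degree R1" unfolding R1 by (subst degree_mult_eq) auto
    then show ?thesis using degR by simp
  qed
  define t where "t j = real j ^ 2 / real d ^ 2" for j :: nat
  have dpos: "real d > 0" using d1 by simp
  have tpos: "t j > 0" if "1 \<le> j" for j using that dpos unfolding t_def by simp
  have tle1: "t j \<le> 1" if "j \<le> d" for j
    using that dpos unfolding t_def by (simp add: power_mono)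
  have inj: "inj_on t {1..d}"
  proof
    fix i j assume "i \<in> {1..d}" "j \<in> {1..d}" "t i = t j"
    hence "real i ^ 2 = real j ^ 2" unfolding t_def using dpos by (simp add: divide_cancel_right)
    thus "i = j" by (simp add: power2_eq_square) (metis of_nat_eq_iff of_nat_mult power2_eq_square power2_eq_imp_eq of_nat_0_le_iff)
  qed
  have lag: "poly R1 0 = (\<Sum>j\<in>{1..d}. poly R1 (t j) * (\<Prod>k\<in>{1..d}-{j}. (0 - t k)/(t j - t k)))"
    by (rule lagrange[OF _ inj]) (use degR1 in simp_all)
  have term_bnd: "\<bar>poly R1 (t j) * (\<Prod>k\<in>{1..d}-{j}. (0 - t k)/(t j - t k))\<bar> \<le> 2 * B * (real d^2 / real j^2) * 2"
    if j: "j \<in> {1..d}" for j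
  proof -
    have tj: "t j > 0" "t j \<le> 1" using j tpos tle1 by auto
    have "poly R (t j) = t j * poly R1 (t j)" unfolding R1 by simp
    hence e1: "poly R1 (t j) = poly R (t j) / t j" using tj by simp
    have "\<bar>poly R (t j)\<bar> \<le> 2 * B"
    proof -
      have "\<bar>poly R (t j)\<bar> \<le> \<bar>poly P (t j)\<bar> + \<bar>poly P 0\<bar>" unfolding R_def by simp
      also have "\<dots> \<le> B + B" using bnd[of "t j"] bnd[of 0] tj by simp
      finally show ?thesis by simp
    qed
    hence a1: "\<bar>poly R1 (t j)\<bar> \<le> 2 * B * (real d^2 / real j^2)"
    proof -
      assume h: "\<bar>poly R (t j)\<bar> \<le> 2 * B"
      have "\<bar>poly R1 (t j)\<bar> = \<bar>poly R (t j)\<bar> * (1 / t j)" using e1 tj by (simp add: abs_div)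
      also have "\<dots> \<le> 2 * B * (1 / t j)" by (rule mult_right_mono[OF h]) (use tj in auto)
      also have "1 / t j = real d^2 / real j^2" unfolding t_def by simp
      finally show ?thesis .
    qed
    have "\<bar>\<Prod>k\<in>{1..d}-{j}. (0 - t k)/(t j - t k)\<bar> = (\<Prod>k\<in>{1..d}-{j}. real (k^2) / \<bar>real (j^2) - real (k^2)\<bar>)"
      unfolding abs_prod
    proof (rule prod.cong[OF refl])
      fix k assume "k \<in> {1..d}-{j}"
      have "\<bar>(0 - t k)/(t j - t k)\<bar> = \<bar>(real k ^ 2 / real d ^ 2) / ((real j ^ 2 - real k ^ 2) / real d ^ 2)\<bar>"
        unfolding t_def by (simp add: diff_divide_distrib)
      also have "\<dots> = \<bar>real k ^ 2 / (real j ^ 2 - real k ^ 2)\<bar>"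
        using div_div_cancel_real[of "real d ^ 2" "real k ^ 2" "real j ^ 2 - real k ^ 2"] dpos by simp
      also have "\<dots> = \<bar>real k ^ 2\<bar> / \<bar>real j ^ 2 - real k ^ 2\<bar>" by (rule abs_divide)
      also have "\<dots> = real (k^2) / \<bar>real (j^2) - real (k^2)\<bar>" by (simp only: of_nat_power abs_power2 abs_of_nat)
      finally show "\<bar>(0 - t k)/(t j - t k)\<bar> = real (k^2) / \<bar>real (j^2) - real (k^2)\<bar>" .
    qed
    also have "\<dots> \<le> 2" using prod_ratio_le2[of j d] j by simp
    finally have a2: "\<bar>\<Prod>k\<in>{1..d}-{j}. (0 - t k)/(t j - t k)\<bar> \<le> 2" .
    show ?thesis unfolding abs_mult
      by (rule mult_mono[OF a1 a2]) (use B0 in auto)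
  qed
  have "\<bar>coeff P 1\<bar> \<le> (\<Sum>j\<in>{1..d}. 2 * B * (real d^2 / real j^2) * 2)"
    unfolding c1 lag by (rule order_trans[OF sum_abs sum_mono]) (rule term_bnd)
  also have "\<dots> = 4 * B * real d^2 * (\<Sum>j=1..d. 1 / real j ^ 2)"
    by (simp add: sum_distrib_left field_simps)
  also have "\<dots> \<le> 4 * B * real d^2 * 2"
  proof (rule mult_left_mono)
    show "(\<Sum>j=1..d. 1 / real j ^ 2) \<le> 2" using sum_inv_sq[OF d1] dpos
      by (smt (verit) divide_nonneg_nonneg of_nat_0_le_iff zero_le_one)
  qed (use B0 in simp)
  finally show ?thesis by (simp add: mult_ac)
qed

lemma line_poly:
  fixes f :: "real^'n \<Rightarrow> real"
  assumes "poly_fun_deg_le f d"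
  shows "\<exists>P. degree P \<le> d \<and> (\<forall>\<sigma>. f (x + \<sigma> *\<^sub>R u) = poly P \<sigma>)"
proof -
  obtain c :: "('n \<Rightarrow> nat) \<Rightarrow> real" where fin: "finite {\<alpha>. c \<alpha> \<noteq> 0}"
    and dg: "\<forall>\<alpha>. c \<alpha> \<noteq> 0 \<longrightarrow> sum \<alpha> UNIV \<le> d"
    and fe: "\<forall>x. f x = (\<Sum>\<alpha>\<in>{\<alpha>. c \<alpha> \<noteq> 0}. c \<alpha> * monom_eval \<alpha> x)"
    using assms unfolding poly_fun_deg_le_def by blast
  define P where "P = (\<Sum>\<alpha>\<in>{\<alpha>. c \<alpha> \<noteq> 0}. smult (c \<alpha>) (\<Prod>i\<in>UNIV. [:x $ i, u $ i:] ^ (\<alpha> i)))"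
  have "degree P \<le> d"
    unfolding P_def
  proof (rule degree_sum_le[OF fin])
    fix \<alpha> assume a: "\<alpha> \<in> {\<alpha>. c \<alpha> \<noteq> 0}"
    have "degree (\<Prod>i\<in>UNIV. [:x $ i, u $ i:] ^ (\<alpha> i)) \<le> sum (degree \<circ> (\<lambda>i. [:x $ i, u $ i:] ^ (\<alpha> i))) UNIV"
      by (rule degree_prod_sum_le) simp
    also have "\<dots> \<le> sum \<alpha> UNIV"
    proof (rule sum_mono)
      fix i :: 'n
      have "degree ([:x $ i, u $ i:] ^ (\<alpha> i)) \<le> degree [:x $ i, u $ i:] * \<alpha> i" by (rule degree_power_le)
      also have "\<dots> \<le> 1 * \<alpha> i" by (intro mult_right_mono) auto
      finally show "(degree \<circ> (\<lambda>i. [:x $ i, u $ i:] ^ (\<alpha> i))) i \<le> \<alpha> i" by simp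
    qed
    also have "\<dots> \<le> d" using dg a by auto
    finally show "degree (smult (c \<alpha>) (\<Prod>i\<in>UNIV. [:x $ i, u $ i:] ^ (\<alpha> i))) \<le> d"
      using degree_smult_le order_trans by blast
  qed
  moreover have "f (x + \<sigma> *\<^sub>R u) = poly P \<sigma>" for \<sigma>
  proof -
    have "f (x + \<sigma> *\<^sub>R u) = (\<Sum>\<alpha>\<in>{\<alpha>. c \<alpha> \<noteq> 0}. c \<alpha> * monom_eval \<alpha> (x + \<sigma> *\<^sub>R u))"
      using fe by blast
    also have "\<dots> = poly P \<sigma>"
      unfolding P_def monom_eval_def by (simp add: poly_sum poly_prod algebra_simps)
    finally show ?thesis .
  qed
  ultimately show ?thesis by blast
qed

lemma poly_has_deriv:
  fixes f :: "real^'n \<Rightarrow> real"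
  assumes "poly_fun_deg_le f d"
  shows "\<exists>D. (f has_derivative D) (at x)"
proof -
  obtain c :: "('n \<Rightarrow> nat) \<Rightarrow> real" where
    fe: "\<forall>x. f x = (\<Sum>\<alpha>\<in>{\<alpha>. c \<alpha> \<noteq> 0}. c \<alpha> * monom_eval \<alpha> x)"
    using assms unfolding poly_fun_deg_le_def by blast
  have feq: "f = (\<lambda>x. \<Sum>\<alpha>\<in>{\<alpha>. c \<alpha> \<noteq> 0}. c \<alpha> * (\<Prod>i\<in>UNIV. (x $ i) ^ (\<alpha> i)))"
    using fe unfolding monom_eval_def by auto
  show ?thesis unfolding feq
    by (rule exI, (rule derivative_intros bounded_linear_imp_has_derivative[OF bounded_linear_vec_nth])+)
qed

lemma deriv_line:
  fixes f :: "real^'n \<Rightarrow> real"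
  assumes D: "(f has_derivative D) (at (x + \<tau> *\<^sub>R w))"
    and P: "\<forall>\<sigma>. f (x + \<sigma> *\<^sub>R w) = poly P \<sigma>"
  shows "D w = poly (pderiv P) \<tau>"
proof -
  have g: "((\<lambda>\<sigma>. x + \<sigma> *\<^sub>R w) has_derivative (\<lambda>h. h *\<^sub>R w)) (at \<tau>)"
    by (auto intro!: derivative_eq_intros)
  have c1: "((\<lambda>\<sigma>. f (x + \<sigma> *\<^sub>R w)) has_derivative (\<lambda>h. D (h *\<^sub>R w))) (at \<tau>)"
    using has_derivative_compose[OF g D] by (simp add: o_def)
  have c2: "((\<lambda>\<sigma>. f (x + \<sigma> *\<^sub>R w)) has_derivative (\<lambda>h. poly (pderiv P) \<tau> * h)) (at \<tau>)"
    using poly_DERIV[of P \<tau>] P unfolding has_field_derivative_def by simp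
  have "(\<lambda>h. D (h *\<^sub>R w)) = (\<lambda>h. poly (pderiv P) \<tau> * h)" by (rule has_derivative_unique[OF c1 c2])
  from fun_cong[OF this, of 1] show ?thesis by simp
qed

lemma cube_convex:
  assumes "x \<in> cube" "y \<in> cube" "0 \<le> \<sigma>" "\<sigma> \<le> 1"
  shows "x + \<sigma> *\<^sub>R (y - x) \<in> cube"
proof -
  have "\<bar>x $ i + \<sigma> * (y $ i - x $ i)\<bar> \<le> 1" for i
  proof -
    have xa: "\<bar>x $ i\<bar> \<le> 1" using assms(1) unfolding cube_def by blast
    have ya: "\<bar>y $ i\<bar> \<le> 1" using assms(2) unfolding cube_def by blast
    have "x $ i + \<sigma> * (y $ i - x $ i) = (1 - \<sigma>) * x $ i + \<sigma> * y $ i" by (simp add: algebra_simps)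
    also have "\<bar>\<dots>\<bar> \<le> \<bar>(1 - \<sigma>) * x $ i\<bar> + \<bar>\<sigma> * y $ i\<bar>" by (rule abs_triangle_ineq)
    also have "\<dots> = (1 - \<sigma>) * \<bar>x $ i\<bar> + \<sigma> * \<bar>y $ i\<bar>" using assms(3,4) by (simp add: abs_mult)
    also have "\<dots> \<le> (1 - \<sigma>) * 1 + \<sigma> * 1"
      by (intro add_mono mult_left_mono) (use xa ya assms(3,4) in auto)
    finally show ?thesis by simp
  qed
  thus ?thesis unfolding cube_def by simp
qed

lemma dir_bound_seg:
  fixes f :: "real^'n \<Rightarrow> real"
  assumes pf: "poly_fun_deg_le f d" and D: "(f has_derivative D) (at x)"
    and seg: "\<And>\<sigma>. 0 \<le> \<sigma> \<Longrightarrow> \<sigma> \<le> 1 \<Longrightarrow> x + \<sigma> *\<^sub>R u \<in> cube"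
    and M: "\<And>y. y \<in> cube \<Longrightarrow> \<bar>f y\<bar> \<le> M"
  shows "\<bar>D u\<bar> \<le> 8 * real d ^ 2 * M"
proof -
  obtain P where dP: "degree P \<le> d" and P: "\<forall>\<sigma>. f (x + \<sigma> *\<^sub>R u) = poly P \<sigma>"
    using line_poly[OF pf] by blast
  have "D u = poly (pderiv P) 0" by (rule deriv_line) (use D P in auto)
  also have "\<dots> = coeff P 1" by (simp add: poly_0_coeff_0 coeff_pderiv)
  finally have e: "D u = coeff P 1" .
  have "\<bar>coeff P 1\<bar> \<le> 8 * real d ^ 2 * M"
  proof (rule markov_endpoint[OF dP])
    fix \<sigma> :: real assume "0 \<le> \<sigma>" "\<sigma> \<le> 1"
    thus "\<bar>poly P \<sigma>\<bar> \<le> M" using M[OF seg] P by metis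
  qed
  thus ?thesis using e by simp
qed

lemma dir_bound:
  fixes f :: "real^'n \<Rightarrow> real"
  assumes pf: "poly_fun_deg_le f d" and D: "(f has_derivative D) (at x)"
    and x: "x \<in> cube"
    and M: "\<And>y. y \<in> cube \<Longrightarrow> \<bar>f y\<bar> \<le> M"
  shows "\<bar>D w\<bar> \<le> 8 * real d ^ 2 * M * norm w"
proof (cases "w = 0")
  case True
  have "linear D" using D has_derivative_linear by blast
  hence "D w = 0" using True linear_0 by blast
  moreover have "M \<ge> 0" using M[OF x] by linarith
  ultimately show ?thesis by simp
next
  case False
  define n where "n = norm w"
  have n: "n > 0" using False unfolding n_def by simp
  define e1 where "e1 = (1 / n) *\<^sub>R w"
  define e0 where "e0 = (- 1 / n) *\<^sub>R w"
  have e1c: "e1 \<in> cube" and e0c: "e0 \<in> cube"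
    unfolding cube_def e1_def e0_def using n component_le_norm_cart[of w] unfolding n_def
    by (auto simp: abs_mult divide_le_eq)
  have lin: "linear D" using D has_derivative_linear by blast
  have b1: "\<bar>D (e1 - x)\<bar> \<le> 8 * real d ^ 2 * M"
    by (rule dir_bound_seg[OF pf D _ M]) (use cube_convex[OF x e1c] in auto)
  have b0: "\<bar>D (e0 - x)\<bar> \<le> 8 * real d ^ 2 * M"
    by (rule dir_bound_seg[OF pf D _ M]) (use cube_convex[OF x e0c] in auto)
  have e10a: "e1 - e0 = (1 / n - (- 1 / n)) *\<^sub>R w" unfolding e1_def e0_def by (rule scaleR_diff_left[symmetric])
  have e10b: "1 / n - (- 1 / n) = 2 / n" by (simp add: diff_divide_distrib[symmetric])
  have e10: "e1 - e0 = (2 / n) *\<^sub>R w" using e10a e10b by simp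
  have "D (e1 - x) - D (e0 - x) = D (e1 - e0)" using lin by (simp add: linear_diff)
  also have "e1 - e0 = (2 / n) *\<^sub>R w" by (rule e10)
  also have "D \<dots> = (2 / n) * D w" using lin by (simp add: linear_scale)
  finally have "\<bar>(2 / n) * D w\<bar> \<le> 16 * real d ^ 2 * M" using b1 b0 by linarith
  hence "(2 / n) * \<bar>D w\<bar> \<le> 16 * real d ^ 2 * M" using n by (simp add: abs_mult)
  hence "\<bar>D w\<bar> \<le> 8 * real d ^ 2 * M * n" using n by (simp add: field_simps)
  thus ?thesis unfolding n_def .
qed

lemma lipschitz_bound:
  fixes f :: "real^'n \<Rightarrow> real"
  assumes pf: "poly_fun_deg_le f d" and x: "x \<in> cube" and y: "y \<in> cube"
    and M: "\<And>z. z \<in> cube \<Longrightarrow> \<bar>f z\<bar> \<le> M"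
  shows "\<bar>f y - f x\<bar> \<le> 8 * real d ^ 2 * M * dist x y"
proof -
  obtain P where P: "\<forall>\<sigma>. f (x + \<sigma> *\<^sub>R (y - x)) = poly P \<sigma>"
    using line_poly[OF pf] by blast
  obtain \<tau> :: real where tau: "0 < \<tau>" "\<tau> < 1" and mvt: "poly P 1 - poly P 0 = (1 - 0) * poly (pderiv P) \<tau>"
    using poly_MVT[of 0 1 P] by auto
  obtain D where D: "(f has_derivative D) (at (x + \<tau> *\<^sub>R (y - x)))" using poly_has_deriv[OF pf] by blast
  have "D (y - x) = poly (pderiv P) \<tau>" by (rule deriv_line[OF D P])
  moreover have "f y - f x = poly P 1 - poly P 0" using P[rule_format, of 1] P[rule_format, of 0] by simp
  moreover have "\<bar>D (y - x)\<bar> \<le> 8 * real d ^ 2 * M * norm (y - x)"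
    by (rule dir_bound[OF pf D _ M]) (use cube_convex[OF x y] tau in auto)
  ultimately show ?thesis using mvt by (simp add: dist_norm norm_minus_commute)
qed
theorem mainTheorem7:
  fixes g :: "nat \<Rightarrow> real^'n \<Rightarrow> real" and r :: nat
    and f :: "real^'n \<Rightarrow> real" and d :: nat
  assumes g_poly: "\<forall>i\<in>{1..r}. is_poly (g i)"
    and archim: "in_qmodule g r (\<lambda>x. 1 - (norm x)^2)"
    and g_small: "\<forall>i\<in>{1..r}. supnorm (g i) \<le> 1/2"
    and S_ne: "semialg g r \<noteq> {}"
    and f_poly: "is_poly f"
    and f_deg: "poly_degree f = d"
    and fstar_pos: "Inf (f ` semialg g r) > 0"
    and neg: "\<exists>x\<in>cube - semialg g r. f x \<le> 0"
  shows "hausdorff_dist {x\<in>cube. f x \<le> 3 * Inf (f ` semialg g r) / 4} (semialg g r)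
           \<ge> (Inf (f ` semialg g r) / supnorm f) / (8 * real d ^ 2)"
proof -
  define S where "S = semialg g r"
  define fs where "fs = Inf (f ` S)"
  define M where "M = supnorm f"
  define A where "A = {x\<in>cube. f x \<le> 3 * fs / 4}"
  have pf: "poly_fun_deg_le f d"
    using f_poly f_deg unfolding is_poly_def poly_degree_def by (metis LeastI_ex)
  have cont: "continuous_on UNIV f"
  proof (rule continuous_at_imp_continuous_on, intro ballI)
    fix x :: "real^'n"
    obtain D where "(f has_derivative D) (at x)" using poly_has_deriv[OF pf] by blast
    thus "isCont f x" by (rule has_derivative_continuous)
  qed
  have cube_eq: "cube = cbox (- 1) (1 :: real^'n)"
    by (auto simp: cube_def mem_box_cart abs_le_iff)
  have cpt: "compact (cube :: (real^'n) set)" unfolding cube_eq by simp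
  have "compact ((\<lambda>x. \<bar>f x\<bar>) ` cube)"
    by (rule compact_continuous_image[OF _ cpt]) (intro continuous_intros continuous_on_subset[OF cont], auto)
  hence bdd: "bdd_above ((\<lambda>x. \<bar>f x\<bar>) ` cube)" by (intro bounded_imp_bdd_above compact_imp_bounded)
  have Mb: "\<bar>f z\<bar> \<le> M" if "z \<in> cube" for z
    unfolding M_def supnorm_def by (rule cSUP_upper[OF that bdd])
  have Scube: "S \<subseteq> cube"
  proof
    fix s assume s: "s \<in> S"
    obtain \<sigma> where sig: "(\<forall>i\<in>{0..r}. is_sos (\<sigma> i))
      \<and> (\<forall>x. 1 - (norm x)^2 = \<sigma> 0 x + (\<Sum>i=1..r. \<sigma> i x * g i x))"
      using archim unfolding in_qmodule_def by (rule exE)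
    have sos: "\<forall>i\<in>{0..r}. is_sos (\<sigma> i)" using sig by (rule conjunct1)
    have eq: "\<forall>x. 1 - (norm x)^2 = \<sigma> 0 x + (\<Sum>i=1..r. \<sigma> i x * g i x)" using sig by (rule conjunct2)
    have nn: "\<sigma> i x \<ge> 0" if "i \<in> {0..r}" for i x
    proof -
      have "is_sos (\<sigma> i)" using sos that by blast
      then obtain ps where ps: "(\<forall>p\<in>set ps. is_poly p) \<and> (\<forall>x. \<sigma> i x = (\<Sum>p\<leftarrow>ps. (p x)^2))"
        unfolding is_sos_def by (rule exE)
      have "\<sigma> i x = (\<Sum>p\<leftarrow>ps. (p x)^2)" using ps by blast
      also have "\<dots> \<ge> 0" by (rule sum_list_nonneg) auto
      finally show ?thesis .
    qed
    have "0 \<le> \<sigma> 0 s + (\<Sum>i=1..r. \<sigma> i s * g i s)"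
      using s nn unfolding S_def semialg_def
      by (intro add_nonneg_nonneg sum_nonneg mult_nonneg_nonneg) auto
    hence "(norm s)^2 \<le> 1" using eq[rule_format, of s] by linarith
    hence "norm s \<le> 1" by (simp add: power_le_one_iff)
    thus "s \<in> cube" unfolding cube_def using component_le_norm_cart order_trans by blast
  qed
  have bddS: "bdd_below (f ` S)"
    by (rule bdd_belowI[of _ "- M"]) (use Mb Scube in force)
  have fsle: "fs \<le> f s" if "s \<in> S" for s
    unfolding fs_def by (rule cInf_lower[OF _ bddS]) (use that in simp)
  have fs0: "fs > 0" using fstar_pos unfolding fs_def S_def .
  obtain x0 where x0: "x0 \<in> cube" "x0 \<notin> S" "f x0 \<le> 0" using neg unfolding S_def by blast
  have M0: "M \<ge> 0" using Mb[OF x0(1)] by simp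
  define K where "K = 8 * real d ^ 2 * M"
  have K0: "K \<ge> 0" unfolding K_def using M0 by simp
  have key: "fs \<le> K * dist x0 s" if "s \<in> S" for s
  proof -
    have "\<bar>f s - f x0\<bar> \<le> K * dist x0 s"
      unfolding K_def by (rule lipschitz_bound[OF pf x0(1) _ Mb]) (use that Scube in auto)
    thus ?thesis using fsle[OF that] x0(3) by linarith
  qed
  obtain s0 where s0: "s0 \<in> S" using S_ne unfolding S_def by blast
  have Kpos: "K > 0"
  proof (rule ccontr)
    assume "\<not> K > 0" hence "K = 0" using K0 by simp
    thus False using key[OF s0] fs0 by simp
  qed
  have "fs / K \<le> infdist x0 S"
    unfolding infdist_notempty[OF S_ne[folded S_def]]
  proof (rule cINF_greatest)
    show "S \<noteq> {}" using s0 by blast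
    fix s assume "s \<in> S"
    thus "fs / K \<le> dist x0 s" using key Kpos by (simp add: divide_le_eq mult.commute)
  qed
  moreover have "infdist x0 S \<le> (SUP a\<in>A. infdist a S)"
  proof (rule cSUP_upper)
    show "x0 \<in> A" unfolding A_def using x0 fs0 by simp
    obtain B where B: "\<forall>a\<in>(cube :: (real^'n) set). norm a \<le> B"
      using compact_imp_bounded[OF cpt] unfolding bounded_iff by blast
    show "bdd_above ((\<lambda>a. infdist a S) ` A)"
    proof (rule bdd_aboveI[of _ "B + norm s0"])
      fix y assume "y \<in> (\<lambda>a. infdist a S) ` A"
      then obtain a where a: "a \<in> A" "y = infdist a S" by blast
      have "y \<le> dist a s0" using infdist_le[OF s0] a by simp
      also have "\<dots> \<le> norm a + norm s0" by (simp add: dist_norm norm_triangle_ineq4)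
      also have "\<dots> \<le> B + norm s0" using B a(1) unfolding A_def by auto
      finally show "y \<le> B + norm s0" .
    qed
  qed
  moreover have "(SUP a\<in>A. infdist a S) \<le> hausdorff_dist A S"
    unfolding hausdorff_dist_def by simp
  moreover have "(fs / M) / (8 * real d ^ 2) = fs / K"
    unfolding K_def by (simp add: mult.commute)
  ultimately show ?thesis unfolding A_def S_def fs_def M_def by linarith
qed
end
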